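(* Let $a,b>0$, $D=[0,a]\times[0,b]$, and let $f:D\to\mathbb{R}$ be a $C^3$ function. Let $p\in\operatorname{int}D$ be a local minimum of $f$ at which the Hessian of $f$ is positive definite. Then there exist a neighborhood $U$ of $p$ and a number $r>0$ such that for every sufficiently large $n$ for which $D_n$ is nondegenerate, there is exactly one grid vertex $p_{i,j}$ of $D_n$ in $U$ which is minimal within its grid circle $C_r(p_{i,j})$.
   Context: For $n\ge1$, $D_n$ denotes the division of $D$ into $n\times n$ congruent rectangles; its grid vertices are the points $p_{i,j}=\left(\frac{i}{n}a,\frac{j}{n}b\right)$, $0\le i,j\le n$. $D_n$ is called nondegenerate if $f(p)\neq f(p')$ for any two distinct grid vertices $p\neq p'$ of $D_n$. The grid circle of centre $p_{i,j}$ and radius $r$ is $C_r(p_{i,j})=\{p_{l,m}: 0\le l,m\le n,\ \max\{|l-i|,|m-j|\}\le r\}$. A grid vertex $p_{i,j}$ is minimal (resp. maximal) within $C_r(p_{i,j})$ if $f(p_{i,j})\le f(q)$ (resp. $f(p_{i,j})\ge f(q)$) for every $q\in C_r(p_{i,j})$. *)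

theory Defs
  imports "HOL-Analysis.Analysis"
begin

definition partial1 :: "(real \<times> real \<Rightarrow> real) \<Rightarrow> real \<times> real \<Rightarrow> real" where
  "partial1 f z = deriv (\<lambda>t. f (t, snd z)) (fst z)"

definition partial2 :: "(real \<times> real \<Rightarrow> real) \<Rightarrow> real \<times> real \<Rightarrow> real" where
  "partial2 f z = deriv (\<lambda>t. f (fst z, t)) (snd z)"

fun Ck_on :: "nat \<Rightarrow> (real \<times> real) set \<Rightarrow> (real \<times> real \<Rightarrow> real) \<Rightarrow> bool" where
  "Ck_on 0 S f = continuous_on S f"
| "Ck_on (Suc k) S f =
     (continuous_on S f \<and>
      (\<forall>z\<in>S. (\<lambda>t. f (t, snd z)) differentiable (at (fst z)) \<and>
              (\<lambda>t. f (fst z, t)) differentiable (at (snd z))) \<and>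
      Ck_on k S (partial1 f) \<and> Ck_on k S (partial2 f))"

definition hessian_pos_def :: "(real \<times> real \<Rightarrow> real) \<Rightarrow> real \<times> real \<Rightarrow> bool" where
  "hessian_pos_def f z \<longleftrightarrow>
     (\<forall>u v. (u, v) \<noteq> (0, 0) \<longrightarrow>
        u * u * partial1 (partial1 f) z + u * v * partial2 (partial1 f) z
        + v * u * partial1 (partial2 f) z + v * v * partial2 (partial2 f) z > 0)"

definition grid_vertex :: "real \<Rightarrow> real \<Rightarrow> nat \<Rightarrow> nat \<Rightarrow> nat \<Rightarrow> real \<times> real" where
  "grid_vertex a b n i j = (real i / real n * a, real j / real n * b)"

definition nondegenerate :: "(real \<times> real \<Rightarrow> real) \<Rightarrow> real \<Rightarrow> real \<Rightarrow> nat \<Rightarrow> bool" where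
  "nondegenerate f a b n \<longleftrightarrow>
     (\<forall>i j l m. i \<le> n \<and> j \<le> n \<and> l \<le> n \<and> m \<le> n \<and>
        grid_vertex a b n i j \<noteq> grid_vertex a b n l m \<longrightarrow>
        f (grid_vertex a b n i j) \<noteq> f (grid_vertex a b n l m))"

definition grid_circle :: "real \<Rightarrow> real \<Rightarrow> nat \<Rightarrow> real \<Rightarrow> nat \<Rightarrow> nat \<Rightarrow> (real \<times> real) set" where
  "grid_circle a b n r i j =
     {grid_vertex a b n l m | l m. l \<le> n \<and> m \<le> n \<and>
        real_of_int (max \<bar>int l - int i\<bar> \<bar>int m - int j\<bar>) \<le> r}"

definition minimal_in_circle ::
  "(real \<times> real \<Rightarrow> real) \<Rightarrow> real \<Rightarrow> real \<Rightarrow> nat \<Rightarrow> real \<Rightarrow> nat \<Rightarrow> nat \<Rightarrow> bool" where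
  "minimal_in_circle f a b n r i j \<longleftrightarrow>
     (\<forall>q\<in>grid_circle a b n r i j. f (grid_vertex a b n i j) \<le> f q)"

end

theory Submission
  imports Defs
begin


definition betw :: "real \<Rightarrow> real \<Rightarrow> real \<Rightarrow> bool" where
  "betw x y t \<longleftrightarrow> min x y \<le> t \<and> t \<le> max x y"

lemma mvt_bound:
  fixes \<phi> \<phi>' :: "real \<Rightarrow> real"
  assumes der: "\<And>t. betw x y t \<Longrightarrow> (\<phi> has_real_derivative \<phi>' t) (at t)"
    and bnd: "\<And>t. betw x y t \<Longrightarrow> \<bar>\<phi>' t - c\<bar> \<le> e"
  shows "\<bar>\<phi> y - \<phi> x - c * (y - x)\<bar> \<le> e * \<bar>y - x\<bar>"
proof -
  define \<psi> where "\<psi> t = \<phi> t - c * t" for t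
  have d: "(\<psi> has_real_derivative (\<phi>' t - c)) (at t)" if "betw x y t" for t
    unfolding \<psi>_def using der[OF that] by (auto intro!: derivative_eq_intros)
  consider "x < y" | "x = y" | "y < x" by linarith
  then show ?thesis
  proof cases
    case 1
    then obtain z where z: "x < z" "z < y" "\<psi> y - \<psi> x = (y - x) * (\<phi>' z - c)"
      using MVT2[OF 1, of \<psi> "\<lambda>t. \<phi>' t - c"] d unfolding betw_def by auto
    have "betw x y z" using z unfolding betw_def by auto
    then have "\<bar>\<phi>' z - c\<bar> \<le> e" by (rule bnd)
    have "\<phi> y - \<phi> x - c * (y - x) = (y - x) * (\<phi>' z - c)"
      using z unfolding \<psi>_def by (simp add: algebra_simps)
    then have "\<bar>\<phi> y - \<phi> x - c * (y - x)\<bar> = \<bar>y - x\<bar> * \<bar>\<phi>' z - c\<bar>" by (simp add: abs_mult)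
    also have "\<dots> \<le> \<bar>y - x\<bar> * e" by (rule mult_left_mono) (use \<open>\<bar>\<phi>' z - c\<bar> \<le> e\<close> in auto)
    finally show ?thesis by (simp add: mult.commute)
  next
    case 2 then show ?thesis by simp
  next
    case 3
    then obtain z where z: "y < z" "z < x" "\<psi> x - \<psi> y = (x - y) * (\<phi>' z - c)"
      using MVT2[OF 3, of \<psi> "\<lambda>t. \<phi>' t - c"] d unfolding betw_def by auto
    have "betw x y z" using z unfolding betw_def by auto
    then have "\<bar>\<phi>' z - c\<bar> \<le> e" by (rule bnd)
    have "\<phi> y - \<phi> x - c * (y - x) = (y - x) * (\<phi>' z - c)"
      using z unfolding \<psi>_def by (simp add: algebra_simps)
    then have "\<bar>\<phi> y - \<phi> x - c * (y - x)\<bar> = \<bar>y - x\<bar> * \<bar>\<phi>' z - c\<bar>" by (simp add: abs_mult)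
    also have "\<dots> \<le> \<bar>y - x\<bar> * e" by (rule mult_left_mono) (use \<open>\<bar>\<phi>' z - c\<bar> \<le> e\<close> in auto)
    finally show ?thesis by (simp add: mult.commute)
  qed
qed

lemma betw_refl1: "betw x y x" and betw_refl2: "betw x y y"
  unfolding betw_def by auto

lemma two_step:
  fixes u Du Dv :: "real \<times> real \<Rightarrow> real"
  assumes d1: "\<And>s t. betw x1 y1 s \<Longrightarrow> betw x2 y2 t \<Longrightarrow> ((\<lambda>\<tau>. u (\<tau>, t)) has_real_derivative Du (s,t)) (at s)"
    and d2: "\<And>s t. betw x1 y1 s \<Longrightarrow> betw x2 y2 t \<Longrightarrow> ((\<lambda>\<tau>. u (s, \<tau>)) has_real_derivative Dv (s,t)) (at t)"
    and b1: "\<And>s t. betw x1 y1 s \<Longrightarrow> betw x2 y2 t \<Longrightarrow> \<bar>Du (s,t) - c1\<bar> \<le> e1"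
    and b2: "\<And>s t. betw x1 y1 s \<Longrightarrow> betw x2 y2 t \<Longrightarrow> \<bar>Dv (s,t) - c2\<bar> \<le> e2"
  shows "\<bar>u (y1,y2) - u (x1,x2) - c1*(y1-x1) - c2*(y2-x2)\<bar> \<le> e1*\<bar>y1-x1\<bar> + e2*\<bar>y2-x2\<bar>"
proof -
  have s1: "\<bar>u (y1,x2) - u (x1,x2) - c1*(y1-x1)\<bar> \<le> e1*\<bar>y1-x1\<bar>"
    using mvt_bound[of x1 y1 "\<lambda>\<tau>. u (\<tau>, x2)" "\<lambda>s. Du (s, x2)" c1 e1]
      d1 b1 betw_refl1[of x2 y2] by blast
  have s2: "\<bar>u (y1,y2) - u (y1,x2) - c2*(y2-x2)\<bar> \<le> e2*\<bar>y2-x2\<bar>"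
    using mvt_bound[of x2 y2 "\<lambda>\<tau>. u (y1, \<tau>)" "\<lambda>t. Dv (y1, t)" c2 e2]
      d2 b2 betw_refl2[of x1 y1] by blast
  show ?thesis using s1 s2 by linarith
qed

lemma betw_sub:
  assumes "betw x y s" "betw x s s'" shows "betw x y s'"
  using assms unfolding betw_def by auto

lemma betw_box:
  assumes "betw x y s" "\<bar>x - c\<bar> < d" "\<bar>y - c\<bar> < d" shows "\<bar>s - c\<bar> < d"
  using assms unfolding betw_def by auto

lemma betw_dist:
  assumes "betw x y s" shows "\<bar>s - x\<bar> \<le> \<bar>y - x\<bar>"
  using assms unfolding betw_def by auto

lemma Ck_deriv:
  assumes "Ck_on (Suc k) S h" "(s,t) \<in> S"
  shows "((\<lambda>\<tau>. h (\<tau>,t)) has_real_derivative partial1 h (s,t)) (at s)"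
    and "((\<lambda>\<tau>. h (s,\<tau>)) has_real_derivative partial2 h (s,t)) (at t)"
  using assms by (auto simp: partial1_def partial2_def DERIV_deriv_iff_real_differentiable)

lemma dist_pair_le: "dist (s,t) (p1,p2) \<le> \<bar>s - p1\<bar> + \<bar>t - p2\<bar>"
  by (simp add: dist_Pair_Pair dist_real_def sqrt_sum_squares_le_sum_abs)

lemma cont_near:
  fixes h :: "real \<times> real \<Rightarrow> real"
  assumes "continuous_on S h" "open S" "(p1,p2) \<in> S" "(\<epsilon>::real) > 0"
  shows "\<exists>d>0. \<forall>s t. \<bar>s - p1\<bar> < d \<longrightarrow> \<bar>t - p2\<bar> < d \<longrightarrow> \<bar>h (s,t) - h (p1,p2)\<bar> < \<epsilon>"
proof -
  have "isCont h (p1,p2)" using assms continuous_on_eq_continuous_at by blast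
  then obtain d where d: "d > 0" "\<forall>x'. dist x' (p1,p2) < d \<longrightarrow> dist (h x') (h (p1,p2)) < \<epsilon>"
    using assms(4) unfolding continuous_at_eps_delta by blast
  show ?thesis
  proof (intro exI[of _ "d/2"] conjI allI impI)
    fix s t assume "\<bar>s - p1\<bar> < d/2" "\<bar>t - p2\<bar> < d/2"
    then have "dist (s,t) (p1,p2) < d" using dist_pair_le[of s t p1 p2] by linarith
    then show "\<bar>h (s,t) - h (p1,p2)\<bar> < \<epsilon>" using d by (simp add: dist_real_def)
  qed (use d in auto)
qed

lemma Ck_parts: "Ck_on (Suc k) S h \<Longrightarrow> Ck_on k S (partial1 h) \<and> Ck_on k S (partial2 h)"
  by simp

lemma Ck_cont: "Ck_on k S h \<Longrightarrow> continuous_on S h"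
  by (cases k) auto

lemma quad_lower:
  fixes A D S w1 w2 :: real
  assumes "A > 0" "D > 0" "4*A*D > S^2"
  shows "A*w1^2 + S*w1*w2 + D*w2^2 \<ge> ((A*D - S^2/4)/(A+D)/2) * (\<bar>w1\<bar>+\<bar>w2\<bar>)^2"
proof -
  define det where "det = A*D - S^2/4"
  have det: "det > 0" using assms unfolding det_def by simp
  have id: "(A+D)*(A*w1^2 + S*w1*w2 + D*w2^2) = det*(w1^2+w2^2) + (A*w1 + S*w2/2)^2 + (D*w2 + S*w1/2)^2"
    unfolding det_def by (simp add: algebra_simps power2_eq_square)
  have "(\<bar>w1\<bar>+\<bar>w2\<bar>)^2 \<le> 2*(w1^2+w2^2)"
  proof -
    have "0 \<le> (\<bar>w1\<bar>-\<bar>w2\<bar>)^2" by simp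
    then show ?thesis by (simp add: power2_eq_square algebra_simps abs_mult_self_eq)
  qed
  then have "det * (\<bar>w1\<bar>+\<bar>w2\<bar>)^2 / 2 \<le> det*(w1^2+w2^2)"
    using det by (simp add: mult_left_mono)
  also have "\<dots> \<le> (A+D)*(A*w1^2 + S*w1*w2 + D*w2^2)" unfolding id by simp
  finally have "det * (\<bar>w1\<bar>+\<bar>w2\<bar>)^2 / 2 / (A+D) \<le> A*w1^2 + S*w1*w2 + D*w2^2"
    using assms by (simp add: divide_le_eq mult.commute algebra_simps)
  then show ?thesis unfolding det_def by (simp add: field_simps)
qed

lemma local_model:
  fixes a b :: real and f :: "real \<times> real \<Rightarrow> real" and p1 p2 :: real
  assumes "a > 0" and "b > 0"
    and C3: "Ck_on 3 ({0<..<a} \<times> {0<..<b}) f"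
    and pin: "(p1,p2) \<in> {0<..<a} \<times> {0<..<b}"
    and lmin: "\<exists>e>0. \<forall>q\<in>{0..a} \<times> {0..b}. dist q (p1,p2) < e \<longrightarrow> f (p1,p2) \<le> f q"
    and hess: "hessian_pos_def f (p1,p2)"
  shows "\<exists>m M. 0 < m \<and> 0 \<le> M \<and> (\<forall>\<epsilon>. 0 < \<epsilon> \<and> \<epsilon> \<le> 1 \<longrightarrow> (\<exists>\<delta>>0.
     (\<forall>s t. \<bar>s - p1\<bar> < \<delta> \<longrightarrow> \<bar>t - p2\<bar> < \<delta> \<longrightarrow> 0 < s \<and> s < a \<and> 0 < t \<and> t < b) \<and>
     (\<forall>x1 x2 y1 y2. \<bar>x1 - p1\<bar> < \<delta> \<longrightarrow> \<bar>x2 - p2\<bar> < \<delta> \<longrightarrow> \<bar>y1 - p1\<bar> < \<delta> \<longrightarrow> \<bar>y2 - p2\<bar> < \<delta> \<longrightarrow>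
        \<bar>f (y1,y2) - f (x1,x2) - partial1 f (x1,x2) * (y1-x1) - partial2 f (x1,x2) * (y2-x2)\<bar>
          \<le> M * (\<bar>y1-x1\<bar>+\<bar>y2-x2\<bar>)^2) \<and>
     (\<forall>x1 x2. \<bar>x1 - p1\<bar> < \<delta> \<longrightarrow> \<bar>x2 - p2\<bar> < \<delta> \<longrightarrow>
        partial1 f (x1,x2) * (x1 - p1) + partial2 f (x1,x2) * (x2 - p2)
          \<ge> (m - \<epsilon>) * (\<bar>x1 - p1\<bar> + \<bar>x2 - p2\<bar>)^2 \<and>
        \<bar>partial1 f (x1,x2)\<bar> \<le> M * (\<bar>x1 - p1\<bar> + \<bar>x2 - p2\<bar>) \<and>
        \<bar>partial2 f (x1,x2)\<bar> \<le> M * (\<bar>x1 - p1\<bar> + \<bar>x2 - p2\<bar>))))"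
proof -
  define Bx where "Bx = {0<..<a} \<times> {0<..<b}"
  have openB: "open Bx" unfolding Bx_def by (simp add: open_Times)
  have pB: "(p1,p2) \<in> Bx" using pin unfolding Bx_def .
  have F: "Ck_on (Suc (Suc (Suc 0))) Bx f" using C3 unfolding Bx_def numeral_3_eq_3 .
  have P1: "Ck_on (Suc (Suc 0)) Bx (partial1 f)" and P2: "Ck_on (Suc (Suc 0)) Bx (partial2 f)"
    using Ck_parts[OF F] by auto
  define g1 where "g1 = partial1 f"
  define g2 where "g2 = partial2 f"
  define A where "A = partial1 (partial1 f)"
  define B where "B = partial2 (partial1 f)"
  define C where "C = partial1 (partial2 f)"
  define D where "D = partial2 (partial2 f)"
  have cA: "continuous_on Bx A" and cB: "continuous_on Bx B" and cC: "continuous_on Bx C"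
    and cD: "continuous_on Bx D"
    unfolding A_def B_def C_def D_def using Ck_parts[OF P1] Ck_parts[OF P2] Ck_cont by blast+
  have df1: "((\<lambda>\<tau>. f (\<tau>,t)) has_real_derivative g1 (s,t)) (at s)"
    and df2: "((\<lambda>\<tau>. f (s,\<tau>)) has_real_derivative g2 (s,t)) (at t)"
    and dA: "((\<lambda>\<tau>. g1 (\<tau>,t)) has_real_derivative A (s,t)) (at s)"
    and dB: "((\<lambda>\<tau>. g1 (s,\<tau>)) has_real_derivative B (s,t)) (at t)"
    and dC: "((\<lambda>\<tau>. g2 (\<tau>,t)) has_real_derivative C (s,t)) (at s)"
    and dD: "((\<lambda>\<tau>. g2 (s,\<tau>)) has_real_derivative D (s,t)) (at t)"
    if "(s,t) \<in> Bx" for s t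
    unfolding g1_def g2_def A_def B_def C_def D_def
    using Ck_deriv[OF F that] Ck_deriv[OF P1 that] Ck_deriv[OF P2 that] by auto
  have p1a: "0 < p1" "p1 < a" and p2b: "0 < p2" "p2 < b" using pin by auto
  obtain e where e: "e > 0" "\<forall>q\<in>{0..a} \<times> {0..b}. dist q (p1,p2) < e \<longrightarrow> f (p1,p2) \<le> f q"
    using lmin by blast
  define d0 where "d0 = min e (min (min p1 (a - p1)) (min p2 (b - p2)))"
  have d0: "d0 > 0" using e p1a p2b unfolding d0_def by simp
  have g10: "g1 (p1,p2) = 0"
  proof (rule DERIV_local_min[OF df1[OF pB] d0], intro allI impI)
    fix y assume y: "\<bar>p1 - y\<bar> < d0"
    have "(y,p2) \<in> {0..a} \<times> {0..b}" using y p2b unfolding d0_def by auto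
    moreover have "dist (y,p2) (p1,p2) < e" using dist_pair_le[of y p2 p1 p2] y unfolding d0_def by auto
    ultimately show "f (p1,p2) \<le> f (y,p2)" using e by blast
  qed
  have g20: "g2 (p1,p2) = 0"
  proof (rule DERIV_local_min[OF df2[OF pB] d0], intro allI impI)
    fix y assume y: "\<bar>p2 - y\<bar> < d0"
    have "(p1,y) \<in> {0..a} \<times> {0..b}" using y p1a unfolding d0_def by auto
    moreover have "dist (p1,y) (p1,p2) < e" using dist_pair_le[of p1 y p1 p2] y unfolding d0_def by auto
    ultimately show "f (p1,p2) \<le> f (p1,y)" using e by blast
  qed
  define A0 where "A0 = A (p1,p2)"
  define B0 where "B0 = B (p1,p2)"
  define C0 where "C0 = C (p1,p2)"
  define D0 where "D0 = D (p1,p2)"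
  have hq: "u * u * A0 + u * v * B0 + v * u * C0 + v * v * D0 > 0" if "(u,v) \<noteq> (0,0)" for u v
    using hess that unfolding hessian_pos_def_def A0_def B0_def C0_def D0_def A_def B_def C_def D_def
    by blast
  have A0p: "A0 > 0" using hq[of 1 0] by simp
  have D0p: "D0 > 0" using hq[of 0 1] by simp
  have "(-(B0+C0))*(-(B0+C0))*A0 + (-(B0+C0))*(2*A0)*B0 + (2*A0)*(-(B0+C0))*C0 + (2*A0)*(2*A0)*D0 > 0"
    using hq[of "-(B0+C0)" "2*A0"] A0p by simp
  then have "A0 * (4*A0*D0 - (B0+C0)^2) > 0" by (simp add: algebra_simps power2_eq_square)
  then have disc: "4*A0*D0 > (B0+C0)^2" using A0p by (simp add: zero_less_mult_iff)
  define m where "m = (A0*D0 - (B0+C0)^2/4)/(A0+D0)/2"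
  have mpos: "m > 0" unfolding m_def using A0p D0p disc by simp
  have Qlow: "A0*w1^2 + (B0+C0)*w1*w2 + D0*w2^2 \<ge> m * (\<bar>w1\<bar>+\<bar>w2\<bar>)^2" for w1 w2
    unfolding m_def by (rule quad_lower[OF A0p D0p disc])
  define M where "M = \<bar>A0\<bar> + \<bar>B0\<bar> + \<bar>C0\<bar> + \<bar>D0\<bar> + 1"
  have M0: "M \<ge> 0" unfolding M_def by simp
  show ?thesis
  proof (rule exI[of _ m], rule exI[of _ M], intro conjI mpos M0 allI impI)
    fix \<epsilon> :: real assume \<epsilon>: "0 < \<epsilon> \<and> \<epsilon> \<le> 1"
    obtain eA where eA: "eA > 0" "\<forall>s t. \<bar>s - p1\<bar> < eA \<longrightarrow> \<bar>t - p2\<bar> < eA \<longrightarrow> \<bar>A (s,t) - A0\<bar> < \<epsilon>"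
      using cont_near[OF cA openB pB, of \<epsilon>] \<epsilon> unfolding A0_def by blast
    obtain eB where eB: "eB > 0" "\<forall>s t. \<bar>s - p1\<bar> < eB \<longrightarrow> \<bar>t - p2\<bar> < eB \<longrightarrow> \<bar>B (s,t) - B0\<bar> < \<epsilon>"
      using cont_near[OF cB openB pB, of \<epsilon>] \<epsilon> unfolding B0_def by blast
    obtain eC where eC: "eC > 0" "\<forall>s t. \<bar>s - p1\<bar> < eC \<longrightarrow> \<bar>t - p2\<bar> < eC \<longrightarrow> \<bar>C (s,t) - C0\<bar> < \<epsilon>"
      using cont_near[OF cC openB pB, of \<epsilon>] \<epsilon> unfolding C0_def by blast
    obtain eD where eD: "eD > 0" "\<forall>s t. \<bar>s - p1\<bar> < eD \<longrightarrow> \<bar>t - p2\<bar> < eD \<longrightarrow> \<bar>D (s,t) - D0\<bar> < \<epsilon>"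
      using cont_near[OF cD openB pB, of \<epsilon>] \<epsilon> unfolding D0_def by blast
    define \<delta> where "\<delta> = min (min (min eA eB) (min eC eD)) (min (min p1 (a - p1)) (min p2 (b - p2)))"
    have \<delta>: "\<delta> > 0" unfolding \<delta>_def using eA eB eC eD p1a p2b by simp
    have \<delta>le: "\<delta> \<le> eA" "\<delta> \<le> eB" "\<delta> \<le> eC" "\<delta> \<le> eD" "\<delta> \<le> p1" "\<delta> \<le> a - p1" "\<delta> \<le> p2" "\<delta> \<le> b - p2"
      unfolding \<delta>_def by (simp_all add: min_le_iff_disj)
    have inB: "0 < s \<and> s < a \<and> 0 < t \<and> t < b" if "\<bar>s - p1\<bar> < \<delta>" "\<bar>t - p2\<bar> < \<delta>" for s t
      using that \<delta>le(5-8) by (auto simp: abs_less_iff)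
    have inBx: "(s,t) \<in> Bx" if "\<bar>s - p1\<bar> < \<delta>" "\<bar>t - p2\<bar> < \<delta>" for s t
      using inB[OF that] unfolding Bx_def by auto
    have nA: "\<bar>A (s,t) - A0\<bar> \<le> \<epsilon>" and nB: "\<bar>B (s,t) - B0\<bar> \<le> \<epsilon>"
      and nC: "\<bar>C (s,t) - C0\<bar> \<le> \<epsilon>" and nD: "\<bar>D (s,t) - D0\<bar> \<le> \<epsilon>"
      if "\<bar>s - p1\<bar> < \<delta>" "\<bar>t - p2\<bar> < \<delta>" for s t
    proof -
      have "\<bar>s - p1\<bar> < eA" "\<bar>t - p2\<bar> < eA" using that \<delta>le(1) by linarith+
      then show "\<bar>A (s,t) - A0\<bar> \<le> \<epsilon>" using eA(2) by (meson less_imp_le)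
      have "\<bar>s - p1\<bar> < eB" "\<bar>t - p2\<bar> < eB" using that \<delta>le(2) by linarith+
      then show "\<bar>B (s,t) - B0\<bar> \<le> \<epsilon>" using eB(2) by (meson less_imp_le)
      have "\<bar>s - p1\<bar> < eC" "\<bar>t - p2\<bar> < eC" using that \<delta>le(3) by linarith+
      then show "\<bar>C (s,t) - C0\<bar> \<le> \<epsilon>" using eC(2) by (meson less_imp_le)
      have "\<bar>s - p1\<bar> < eD" "\<bar>t - p2\<bar> < eD" using that \<delta>le(4) by linarith+
      then show "\<bar>D (s,t) - D0\<bar> \<le> \<epsilon>" using eD(2) by (meson less_imp_le)
    qed
    have bA: "\<bar>A (s,t) - 0\<bar> \<le> M" and bB: "\<bar>B (s,t) - 0\<bar> \<le> M"
      and bC: "\<bar>C (s,t) - 0\<bar> \<le> M" and bD: "\<bar>D (s,t) - 0\<bar> \<le> M"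
      if "\<bar>s - p1\<bar> < \<delta>" "\<bar>t - p2\<bar> < \<delta>" for s t
    proof -
      have M1: "\<bar>A0\<bar> + 1 \<le> M" "\<bar>B0\<bar> + 1 \<le> M" "\<bar>C0\<bar> + 1 \<le> M" "\<bar>D0\<bar> + 1 \<le> M" unfolding M_def by simp_all
      have t: "\<bar>X\<bar> \<le> \<bar>Y\<bar> + \<bar>X - Y\<bar>" for X Y :: real by linarith
      show "\<bar>A (s,t) - 0\<bar> \<le> M" using t[of "A (s,t)" A0] nA[OF that] \<epsilon> M1(1) by simp
      show "\<bar>B (s,t) - 0\<bar> \<le> M" using t[of "B (s,t)" B0] nB[OF that] \<epsilon> M1(2) by simp
      show "\<bar>C (s,t) - 0\<bar> \<le> M" using t[of "C (s,t)" C0] nC[OF that] \<epsilon> M1(3) by simp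
      show "\<bar>D (s,t) - 0\<bar> \<le> M" using t[of "D (s,t)" D0] nD[OF that] \<epsilon> M1(4) by simp
    qed
    have inbox: "\<bar>s' - p1\<bar> < \<delta> \<and> \<bar>t' - p2\<bar> < \<delta>"
      if "\<bar>x1 - p1\<bar> < \<delta>" "\<bar>x2 - p2\<bar> < \<delta>" "\<bar>y1 - p1\<bar> < \<delta>" "\<bar>y2 - p2\<bar> < \<delta>"
         "betw x1 y1 s'" "betw x2 y2 t'" for x1 x2 y1 y2 s' t'
      using betw_box that by blast
    have F1: "\<bar>f (y1,y2) - f (x1,x2) - g1 (x1,x2) * (y1-x1) - g2 (x1,x2) * (y2-x2)\<bar>
          \<le> M * (\<bar>y1-x1\<bar>+\<bar>y2-x2\<bar>)^2"
      if X: "\<bar>x1 - p1\<bar> < \<delta>" "\<bar>x2 - p2\<bar> < \<delta>" "\<bar>y1 - p1\<bar> < \<delta>" "\<bar>y2 - p2\<bar> < \<delta>" for x1 x2 y1 y2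
    proof -
      define N where "N = \<bar>y1-x1\<bar>+\<bar>y2-x2\<bar>"
      have G1: "\<bar>g1 (s,t) - g1 (x1,x2)\<bar> \<le> M * N" and G2: "\<bar>g2 (s,t) - g2 (x1,x2)\<bar> \<le> M * N"
        if st: "betw x1 y1 s" "betw x2 y2 t" for s t
      proof -
        have ib: "\<bar>s' - p1\<bar> < \<delta> \<and> \<bar>t' - p2\<bar> < \<delta>" if "betw x1 s s'" "betw x2 t t'" for s' t'
          using inbox[OF X betw_sub[OF st(1) that(1)] betw_sub[OF st(2) that(2)]] .
        have "\<bar>g1 (s,t) - g1 (x1,x2) - 0*(s-x1) - 0*(t-x2)\<bar> \<le> M*\<bar>s-x1\<bar> + M*\<bar>t-x2\<bar>"
          by (rule two_step[where Du=A and Dv=B]) (use ib inBx dA dB bA bB in blast)+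
        moreover have "M*\<bar>s-x1\<bar> + M*\<bar>t-x2\<bar> \<le> M * N"
          using betw_dist[OF st(1)] betw_dist[OF st(2)] M0 unfolding N_def
          by (simp add: distrib_left[symmetric] mult_left_mono)
        ultimately show "\<bar>g1 (s,t) - g1 (x1,x2)\<bar> \<le> M * N" by simp
        have "\<bar>g2 (s,t) - g2 (x1,x2) - 0*(s-x1) - 0*(t-x2)\<bar> \<le> M*\<bar>s-x1\<bar> + M*\<bar>t-x2\<bar>"
          by (rule two_step[where Du=C and Dv=D]) (use ib inBx dC dD bC bD in blast)+
        with \<open>M*\<bar>s-x1\<bar> + M*\<bar>t-x2\<bar> \<le> M * N\<close> show "\<bar>g2 (s,t) - g2 (x1,x2)\<bar> \<le> M * N" by simp
      qed
      have "\<bar>f (y1,y2) - f (x1,x2) - g1 (x1,x2) * (y1-x1) - g2 (x1,x2) * (y2-x2)\<bar>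
          \<le> (M*N)*\<bar>y1-x1\<bar> + (M*N)*\<bar>y2-x2\<bar>"
        by (rule two_step[where Du=g1 and Dv=g2]) (use inbox[OF X] inBx df1 df2 G1 G2 in blast)+
      also have "\<dots> = M * N^2" unfolding N_def by (simp add: power2_eq_square algebra_simps)
      finally show ?thesis unfolding N_def .
    qed
    have pbox: "\<bar>p1 - p1\<bar> < \<delta>" "\<bar>p2 - p2\<bar> < \<delta>" using \<delta> by auto
    have F2: "g1 (x1,x2) * (x1 - p1) + g2 (x1,x2) * (x2 - p2) \<ge> (m - \<epsilon>) * (\<bar>x1 - p1\<bar> + \<bar>x2 - p2\<bar>)^2 \<and>
        \<bar>g1 (x1,x2)\<bar> \<le> M * (\<bar>x1 - p1\<bar> + \<bar>x2 - p2\<bar>) \<and>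
        \<bar>g2 (x1,x2)\<bar> \<le> M * (\<bar>x1 - p1\<bar> + \<bar>x2 - p2\<bar>)"
      if X: "\<bar>x1 - p1\<bar> < \<delta>" "\<bar>x2 - p2\<bar> < \<delta>" for x1 x2
    proof -
      define w1 where "w1 = x1 - p1"
      define w2 where "w2 = x2 - p2"
      define N where "N = \<bar>w1\<bar> + \<bar>w2\<bar>"
      have N0: "N \<ge> 0" unfolding N_def by simp
      have r1: "\<bar>g1 (x1,x2) - g1 (p1,p2) - A0*(x1-p1) - B0*(x2-p2)\<bar> \<le> \<epsilon>*\<bar>x1-p1\<bar> + \<epsilon>*\<bar>x2-p2\<bar>"
        by (rule two_step[where Du=A and Dv=B]) (use inbox[OF pbox X] inBx dA dB nA nB in blast)+
      have r2: "\<bar>g2 (x1,x2) - g2 (p1,p2) - C0*(x1-p1) - D0*(x2-p2)\<bar> \<le> \<epsilon>*\<bar>x1-p1\<bar> + \<epsilon>*\<bar>x2-p2\<bar>"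
        by (rule two_step[where Du=C and Dv=D]) (use inbox[OF pbox X] inBx dC dD nC nD in blast)+
      define e1 where "e1 = g1 (x1,x2) - A0*w1 - B0*w2"
      define e2 where "e2 = g2 (x1,x2) - C0*w1 - D0*w2"
      have e1: "\<bar>e1\<bar> \<le> \<epsilon> * N" using r1 g10 unfolding e1_def N_def w1_def w2_def by (simp add: distrib_left)
      have e2: "\<bar>e2\<bar> \<le> \<epsilon> * N" using r2 g20 unfolding e2_def N_def w1_def w2_def by (simp add: distrib_left)
      have "\<bar>e1 * w1\<bar> \<le> \<epsilon> * N * \<bar>w1\<bar>" unfolding abs_mult by (rule mult_right_mono[OF e1]) simp
      moreover have "\<bar>e2 * w2\<bar> \<le> \<epsilon> * N * \<bar>w2\<bar>" unfolding abs_mult by (rule mult_right_mono[OF e2]) simp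
      moreover have "\<epsilon> * N * \<bar>w1\<bar> + \<epsilon> * N * \<bar>w2\<bar> = \<epsilon> * N^2" unfolding N_def
        by (simp add: power2_eq_square algebra_simps)
      moreover have "g1 (x1,x2) * w1 + g2 (x1,x2) * w2 = (A0*w1^2 + (B0+C0)*w1*w2 + D0*w2^2) + e1*w1 + e2*w2"
        unfolding e1_def e2_def by (simp add: power2_eq_square algebra_simps)
      moreover have "A0*w1^2 + (B0+C0)*w1*w2 + D0*w2^2 \<ge> m * N^2" unfolding N_def by (rule Qlow)
      ultimately have c1: "g1 (x1,x2) * w1 + g2 (x1,x2) * w2 \<ge> (m - \<epsilon>) * N^2"
        by (simp add: algebra_simps)
      have "\<bar>A0*w1\<bar> \<le> \<bar>A0\<bar> * N" "\<bar>B0*w2\<bar> \<le> \<bar>B0\<bar> * N" "\<bar>C0*w1\<bar> \<le> \<bar>C0\<bar> * N" "\<bar>D0*w2\<bar> \<le> \<bar>D0\<bar> * N"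
        unfolding abs_mult N_def by (simp_all add: mult_left_mono)
      moreover have "\<epsilon> * N \<le> 1 * N" using \<epsilon> N0 by (intro mult_right_mono) auto
      moreover have "M * N = \<bar>A0\<bar>*N + \<bar>B0\<bar>*N + \<bar>C0\<bar>*N + \<bar>D0\<bar>*N + 1*N" unfolding M_def by (simp add: algebra_simps)
      ultimately have c2: "\<bar>g1 (x1,x2)\<bar> \<le> M * N" "\<bar>g2 (x1,x2)\<bar> \<le> M * N"
        using e1 e2 unfolding e1_def e2_def
        by (smt (verit) abs_ge_zero mult_nonneg_nonneg N0)+
      show ?thesis using c1 c2 unfolding w1_def w2_def N_def by simp
    qed
    show "\<exists>\<delta>>0.
     (\<forall>s t. \<bar>s - p1\<bar> < \<delta> \<longrightarrow> \<bar>t - p2\<bar> < \<delta> \<longrightarrow> 0 < s \<and> s < a \<and> 0 < t \<and> t < b) \<and>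
     (\<forall>x1 x2 y1 y2. \<bar>x1 - p1\<bar> < \<delta> \<longrightarrow> \<bar>x2 - p2\<bar> < \<delta> \<longrightarrow> \<bar>y1 - p1\<bar> < \<delta> \<longrightarrow> \<bar>y2 - p2\<bar> < \<delta> \<longrightarrow>
        \<bar>f (y1,y2) - f (x1,x2) - partial1 f (x1,x2) * (y1-x1) - partial2 f (x1,x2) * (y2-x2)\<bar>
          \<le> M * (\<bar>y1-x1\<bar>+\<bar>y2-x2\<bar>)^2) \<and>
     (\<forall>x1 x2. \<bar>x1 - p1\<bar> < \<delta> \<longrightarrow> \<bar>x2 - p2\<bar> < \<delta> \<longrightarrow>
        partial1 f (x1,x2) * (x1 - p1) + partial2 f (x1,x2) * (x2 - p2)
          \<ge> (m - \<epsilon>) * (\<bar>x1 - p1\<bar> + \<bar>x2 - p2\<bar>)^2 \<and>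
        \<bar>partial1 f (x1,x2)\<bar> \<le> M * (\<bar>x1 - p1\<bar> + \<bar>x2 - p2\<bar>) \<and>
        \<bar>partial2 f (x1,x2)\<bar> \<le> M * (\<bar>x1 - p1\<bar> + \<bar>x2 - p2\<bar>))"
      unfolding g1_def[symmetric] g2_def[symmetric]
      by (intro exI[of _ \<delta>] conjI \<delta> allI impI inB F1 F2[THEN conjunct1] F2[THEN conjunct2, THEN conjunct1] F2[THEN conjunct2, THEN conjunct2]) assumption+
  qed
qed



lemma round_toward:
  fixes h z c :: real
  assumes "h > 0"
  shows "\<exists>k::int. \<bar>of_int k * h - z\<bar> < h \<and> \<bar>of_int k * h - c\<bar> \<le> max \<bar>z - c\<bar> h"
proof (cases "z \<ge> c")
  case True
  define k where "k = floor (z / h)"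
  have "of_int k \<le> z / h" "z / h < of_int k + 1" unfolding k_def by linarith+
  then have "of_int k * h \<le> z" "z < of_int k * h + h" using assms by (simp_all add: field_simps)
  then show ?thesis using True by (intro exI[of _ k]) auto
next
  case False
  define k where "k = ceiling (z / h)"
  have "z / h \<le> of_int k" "of_int k < z / h + 1" unfolding k_def by linarith+
  then have "z \<le> of_int k * h" "of_int k * h < z + h" using assms by (simp_all add: field_simps)
  then show ?thesis using False by (intro exI[of _ k]) auto
qed

lemma descent:
  fixes f g1 g2 :: "real \<times> real \<Rightarrow> real"
  assumes \<mu>: "\<mu> > 0" and M0: "M \<ge> 0" and hx: "hx > 0" and hy: "hy > 0"
    and Hx: "hx \<le> H" and Hy: "hy \<le> H" and H\<delta>: "H < \<delta>"
    and F1: "\<forall>x1 x2 y1 y2. \<bar>x1 - p1\<bar> < \<delta> \<longrightarrow> \<bar>x2 - p2\<bar> < \<delta> \<longrightarrow> \<bar>y1 - p1\<bar> < \<delta> \<longrightarrow> \<bar>y2 - p2\<bar> < \<delta> \<longrightarrow>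
        \<bar>f (y1,y2) - f (x1,x2) - g1 (x1,x2) * (y1-x1) - g2 (x1,x2) * (y2-x2)\<bar>
          \<le> M * (\<bar>y1-x1\<bar>+\<bar>y2-x2\<bar>)^2"
    and F2: "\<forall>x1 x2. \<bar>x1 - p1\<bar> < \<delta> \<longrightarrow> \<bar>x2 - p2\<bar> < \<delta> \<longrightarrow>
        g1 (x1,x2) * (x1 - p1) + g2 (x1,x2) * (x2 - p2) \<ge> \<mu> * (\<bar>x1 - p1\<bar> + \<bar>x2 - p2\<bar>)^2 \<and>
        \<bar>g1 (x1,x2)\<bar> \<le> M * (\<bar>x1 - p1\<bar> + \<bar>x2 - p2\<bar>) \<and>
        \<bar>g2 (x1,x2)\<bar> \<le> M * (\<bar>x1 - p1\<bar> + \<bar>x2 - p2\<bar>)"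
    and q: "\<bar>q1 - p1\<bar> < \<delta>" "\<bar>q2 - p2\<bar> < \<delta>"
    and far: "\<bar>q1 - p1\<bar> + \<bar>q2 - p2\<bar> > ((4*M+1)/\<mu> + M * ((4*M+1)/\<mu> + 2)^2) * H"
  shows "\<exists>k1 k2::int. \<bar>of_int k1 * hx - p1\<bar> \<le> max \<bar>q1 - p1\<bar> hx \<and> \<bar>of_int k2 * hy - p2\<bar> \<le> max \<bar>q2 - p2\<bar> hy \<and>
     \<bar>of_int k1 * hx - q1\<bar> \<le> ((4*M+1)/\<mu> + 2) * H \<and> \<bar>of_int k2 * hy - q2\<bar> \<le> ((4*M+1)/\<mu> + 2) * H \<and>
     f (of_int k1 * hx, of_int k2 * hy) < f (q1, q2)"
proof -
  define L where "L = (4*M+1)/\<mu>"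
  have L0: "L > 0" unfolding L_def using \<mu> M0 by simp
  have H0: "H > 0" using hx Hx by linarith
  define w1 where "w1 = q1 - p1"
  define w2 where "w2 = q2 - p2"
  define d where "d = \<bar>w1\<bar> + \<bar>w2\<bar>"
  have M2: "M * (L+2)^2 \<ge> 0" using M0 by simp
  have far': "d > (L + M * (L+2)^2) * H" using far unfolding d_def w1_def w2_def L_def .
  have dLH: "d > L * H" using far' M2 H0 by (smt (verit) mult_right_mono)
  have dMH: "d > M * (L+2)^2 * H" using far' L0 H0 by (smt (verit) mult_right_mono)
  have d0: "d > 0" using dLH L0 H0 by (smt (verit) mult_pos_pos)
  define t where "t = L * H / d"
  have t0: "t > 0" and t1: "t < 1" unfolding t_def using L0 H0 d0 dLH by (simp_all add: field_simps)
  define z1 where "z1 = q1 - t * w1"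
  define z2 where "z2 = q2 - t * w2"
  have zp1: "\<bar>z1 - p1\<bar> \<le> \<bar>w1\<bar>"
  proof -
    have "z1 - p1 = (1 - t) * w1" unfolding z1_def w1_def by (simp add: algebra_simps)
    then show ?thesis using t0 t1 by (simp add: abs_mult mult_left_le_one_le)
  qed
  have zp2: "\<bar>z2 - p2\<bar> \<le> \<bar>w2\<bar>"
  proof -
    have "z2 - p2 = (1 - t) * w2" unfolding z2_def w2_def by (simp add: algebra_simps)
    then show ?thesis using t0 t1 by (simp add: abs_mult mult_left_le_one_le)
  qed
  obtain k1 :: int where k1: "\<bar>of_int k1 * hx - z1\<bar> < hx" "\<bar>of_int k1 * hx - p1\<bar> \<le> max \<bar>z1 - p1\<bar> hx"
    using round_toward[OF hx] by blast
  obtain k2 :: int where k2: "\<bar>of_int k2 * hy - z2\<bar> < hy" "\<bar>of_int k2 * hy - p2\<bar> \<le> max \<bar>z2 - p2\<bar> hy"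
    using round_toward[OF hy] by blast
  define y1 where "y1 = of_int k1 * hx"
  define y2 where "y2 = of_int k2 * hy"
  have yb1: "\<bar>y1 - p1\<bar> \<le> max \<bar>q1 - p1\<bar> hx" using k1(2) zp1 unfolding y1_def w1_def by linarith
  have yb2: "\<bar>y2 - p2\<bar> \<le> max \<bar>q2 - p2\<bar> hy" using k2(2) zp2 unfolding y2_def w2_def by linarith
  have yin: "\<bar>y1 - p1\<bar> < \<delta>" "\<bar>y2 - p2\<bar> < \<delta>" using yb1 yb2 q Hx Hy H\<delta> by auto
  define e1 where "e1 = y1 - z1"
  define e2 where "e2 = y2 - z2"
  have e1: "\<bar>e1\<bar> \<le> H" using k1(1) Hx unfolding e1_def y1_def by linarith
  have e2: "\<bar>e2\<bar> \<le> H" using k2(1) Hy unfolding e2_def y2_def by linarith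
  have s1: "y1 - q1 = - (t * w1) + e1" unfolding e1_def z1_def by simp
  have s2: "y2 - q2 = - (t * w2) + e2" unfolding e2_def z2_def by simp
  have td: "t * d = L * H" unfolding t_def using d0 by simp
  have "\<bar>t * w1\<bar> + \<bar>t * w2\<bar> = t * d" unfolding d_def using t0 by (simp add: abs_mult algebra_simps)
  then have Ns: "\<bar>y1 - q1\<bar> + \<bar>y2 - q2\<bar> \<le> (L + 2) * H" using s1 s2 e1 e2 td by (simp add: algebra_simps)
  have Ns1: "\<bar>y1 - q1\<bar> \<le> (L + 2) * H" "\<bar>y2 - q2\<bar> \<le> (L + 2) * H" using Ns by linarith+
  have g: "g1 (q1,q2) * w1 + g2 (q1,q2) * w2 \<ge> \<mu> * d^2" "\<bar>g1 (q1,q2)\<bar> \<le> M * d" "\<bar>g2 (q1,q2)\<bar> \<le> M * d"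
    using F2 q unfolding d_def w1_def w2_def by blast+
  have f1: "f (y1,y2) - f (q1,q2) \<le> g1 (q1,q2) * (y1-q1) + g2 (q1,q2) * (y2-q2) + M * (\<bar>y1-q1\<bar>+\<bar>y2-q2\<bar>)^2"
    using F1 q yin by fastforce
  have "M * (\<bar>y1-q1\<bar>+\<bar>y2-q2\<bar>)^2 \<le> M * ((L+2)*H)^2"
    using Ns M0 by (intro mult_left_mono power_mono) auto
  moreover have "g1 (q1,q2) * (y1-q1) + g2 (q1,q2) * (y2-q2)
      = - t * (g1 (q1,q2) * w1 + g2 (q1,q2) * w2) + (g1 (q1,q2) * e1 + g2 (q1,q2) * e2)"
    unfolding s1 s2 by (simp add: algebra_simps)
  moreover have "t * (\<mu> * d^2) \<le> t * (g1 (q1,q2) * w1 + g2 (q1,q2) * w2)"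
    using g(1) t0 by simp
  moreover have "t * (\<mu> * d^2) = (4*M+1) * H * d"
  proof -
    have "t * (\<mu> * d^2) = (t * d) * \<mu> * d" by (simp add: power2_eq_square)
    also have "\<dots> = L * \<mu> * H * d" using td by simp
    also have "\<dots> = (4*M+1) * H * d" unfolding L_def using \<mu> by simp
    finally show ?thesis .
  qed
  moreover have "\<bar>g1 (q1,q2) * e1\<bar> \<le> M * d * H" unfolding abs_mult
    using g(2) e1 M0 d0 by (intro mult_mono) auto
  moreover have "\<bar>g2 (q1,q2) * e2\<bar> \<le> M * d * H" unfolding abs_mult
    using g(3) e2 M0 d0 by (intro mult_mono) auto
  ultimately have "f (y1,y2) - f (q1,q2) \<le> - (2*M+1) * H * d + M * (L+2)^2 * H * H"
    using f1 by (simp add: algebra_simps power2_eq_square)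
  moreover have "(2*M+1) * H * d > M * (L+2)^2 * H * H"
  proof -
    have "M * (L+2)^2 * H * H < d * H" using dMH H0 by simp
    also have "\<dots> \<le> (2*M+1) * H * d" using M0 H0 d0 by (simp add: mult_right_mono algebra_simps)
    finally show ?thesis .
  qed
  ultimately have "f (y1,y2) < f (q1,q2)" by linarith
  then show ?thesis using yb1 yb2 Ns1 unfolding y1_def y2_def L_def by blast
qed



lemma gv_eq: "grid_vertex a b n i j = (real i * (a / real n), real j * (b / real n))"
  unfolding grid_vertex_def by simp

lemma idx_bound:
  fixes hx H \<kappa> X :: real
  assumes "hx > 0" "H \<le> \<kappa> * hx" "\<bar>u\<bar> * hx \<le> X * H" "X \<ge> 0"
  shows "\<bar>u\<bar> \<le> X * \<kappa>"
proof -
  have "X * H \<le> X * (\<kappa> * hx)" using assms by (simp add: mult_left_mono)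
  then have "\<bar>u\<bar> * hx \<le> (X * \<kappa>) * hx" using assms(3) by (simp add: mult.assoc)
  then show ?thesis using assms(1) by simp
qed

lemma discrete:
  fixes f g1 g2 :: "real \<times> real \<Rightarrow> real"
  assumes a: "a > 0" and b: "b > 0" and \<delta>: "\<delta> > 0" and \<mu>: "\<mu> > 0" and M0: "M \<ge> 0"
    and inB: "\<forall>s t. \<bar>s - p1\<bar> < \<delta> \<longrightarrow> \<bar>t - p2\<bar> < \<delta> \<longrightarrow> 0 < s \<and> s < a \<and> 0 < t \<and> t < b"
    and F1: "\<forall>x1 x2 y1 y2. \<bar>x1 - p1\<bar> < \<delta> \<longrightarrow> \<bar>x2 - p2\<bar> < \<delta> \<longrightarrow> \<bar>y1 - p1\<bar> < \<delta> \<longrightarrow> \<bar>y2 - p2\<bar> < \<delta> \<longrightarrow>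
        \<bar>f (y1,y2) - f (x1,x2) - g1 (x1,x2) * (y1-x1) - g2 (x1,x2) * (y2-x2)\<bar>
          \<le> M * (\<bar>y1-x1\<bar>+\<bar>y2-x2\<bar>)^2"
    and F2: "\<forall>x1 x2. \<bar>x1 - p1\<bar> < \<delta> \<longrightarrow> \<bar>x2 - p2\<bar> < \<delta> \<longrightarrow>
        g1 (x1,x2) * (x1 - p1) + g2 (x1,x2) * (x2 - p2) \<ge> \<mu> * (\<bar>x1 - p1\<bar> + \<bar>x2 - p2\<bar>)^2 \<and>
        \<bar>g1 (x1,x2)\<bar> \<le> M * (\<bar>x1 - p1\<bar> + \<bar>x2 - p2\<bar>) \<and>
        \<bar>g2 (x1,x2)\<bar> \<le> M * (\<bar>x1 - p1\<bar> + \<bar>x2 - p2\<bar>)"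
  shows "\<exists>U r. open U \<and> (p1,p2) \<in> U \<and> r > 0 \<and>
           (\<exists>N. \<forall>n\<ge>N. n \<ge> 1 \<and> nondegenerate f a b n \<longrightarrow>
              (\<exists>!ij. fst ij \<le> n \<and> snd ij \<le> n \<and>
                     grid_vertex a b n (fst ij) (snd ij) \<in> U \<and>
                     minimal_in_circle f a b n r (fst ij) (snd ij)))"
proof -
  define L where "L = (4*M+1)/\<mu>"
  have L0: "L > 0" unfolding L_def using \<mu> M0 by simp
  define \<rho> where "\<rho> = L + M * (L+2)^2"
  have \<rho>0: "\<rho> > 0" unfolding \<rho>_def using L0 M0 by (simp add: add_pos_nonneg)
  define \<kappa> where "\<kappa> = max a b / min a b"
  have \<kappa>0: "\<kappa> > 0" unfolding \<kappa>_def using a b by simp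
  define r where "r = (2*\<rho> + L + 2) * \<kappa>"
  have r0: "r > 0" unfolding r_def using \<rho>0 L0 \<kappa>0 by simp
  define U where "U = {p1-\<delta><..<p1+\<delta>} \<times> {p2-\<delta><..<p2+\<delta>}"
  have Uopen: "open U" unfolding U_def by (simp add: open_Times)
  have inU: "(x1,x2) \<in> U \<longleftrightarrow> \<bar>x1 - p1\<bar> < \<delta> \<and> \<bar>x2 - p2\<bar> < \<delta>" for x1 x2
    unfolding U_def by (auto simp: abs_less_iff)
  have pU: "(p1,p2) \<in> U" using inU \<delta> by simp
  define N where "N = nat (ceiling (2*(r+\<rho>+1)*max a b/\<delta>)) + 1"
  show ?thesis
  proof (intro exI[of _ U] exI[of _ r] conjI Uopen pU r0 exI[of _ N] allI impI)
    fix n :: nat assume n: "N \<le> n" "1 \<le> n \<and> nondegenerate f a b n"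
    have n0: "real n > 0" using n by simp
    define hx where "hx = a / real n"
    define hy where "hy = b / real n"
    define H where "H = max a b / real n"
    have hx0: "hx > 0" and hy0: "hy > 0" and H0: "H > 0"
      unfolding hx_def hy_def H_def using a b n0 by simp_all
    have Hx: "hx \<le> H" and Hy: "hy \<le> H" unfolding hx_def hy_def H_def using n0
      by (simp_all add: divide_right_mono)
    have \<kappa>x: "H \<le> \<kappa> * hx" and \<kappa>y: "H \<le> \<kappa> * hy"
      unfolding hx_def hy_def H_def \<kappa>_def using a b n0 by (auto simp: field_simps min_def max_def)
    have nbig: "real n > 2*(r+\<rho>+1)*max a b/\<delta>"
    proof -
      have "2*(r+\<rho>+1)*max a b/\<delta> \<le> of_int (ceiling (2*(r+\<rho>+1)*max a b/\<delta>))" by linarith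
      also have "\<dots> \<le> real (nat (ceiling (2*(r+\<rho>+1)*max a b/\<delta>)))" by linarith
      also have "\<dots> < real N" unfolding N_def by simp
      also have "\<dots> \<le> real n" using n by simp
      finally show ?thesis .
    qed
    have Hsmall: "(r+\<rho>+1) * H < \<delta>/2"
    proof -
      have "2*(r+\<rho>+1)*max a b < real n * \<delta>" using nbig \<delta> by (simp add: field_simps)
      then show ?thesis unfolding H_def using n0 by (simp add: field_simps)
    qed
    have Hd2: "H < \<delta>/2" and rHd: "r * H + \<rho> * H < \<delta>/2"
      using Hsmall r0 \<rho>0 H0 by (simp_all add: algebra_simps) (smt (verit) mult_pos_pos)+
    define gv where "gv = (\<lambda>i j. (real i * hx, real j * hy))"
    have gvE: "grid_vertex a b n i j = gv i j" for i j unfolding gv_eq gv_def hx_def hy_def ..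
    have nhx: "real n * hx = a" and nhy: "real n * hy = b" unfolding hx_def hy_def using n0 by simp_all
    have idx1: "0 < k \<and> k < int n" if "\<bar>of_int k * hx - p1\<bar> < \<delta>" for k :: int
    proof -
      have "0 < of_int k * hx \<and> of_int k * hx < a" using inB that \<delta> by (metis abs_0 diff_self)
      then have "0 < of_int k * hx" "of_int k * hx < real n * hx" using nhx by auto
      then show ?thesis using hx0 by (simp add: zero_less_mult_iff)
    qed
    have idx2: "0 < k \<and> k < int n" if "\<bar>of_int k * hy - p2\<bar> < \<delta>" for k :: int
    proof -
      have "0 < of_int k * hy \<and> of_int k * hy < b" using inB that \<delta> by (metis abs_0 diff_self)
      then have "0 < of_int k * hy" "of_int k * hy < real n * hy" using nhy by auto
      then show ?thesis using hy0 by (simp add: zero_less_mult_iff)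
    qed
    have circ: "gv l m \<in> grid_circle a b n r i j"
      if "l \<le> n" "m \<le> n" "\<bar>real l - real i\<bar> \<le> r" "\<bar>real m - real j\<bar> \<le> r" for l m i j
      unfolding grid_circle_def gvE[symmetric]
      by (rule CollectI, rule exI[of _ l], rule exI[of _ m]) (use that in \<open>auto simp: of_int_max\<close>)
    have desc: "\<exists>l m. l \<le> n \<and> m \<le> n \<and> \<bar>real l - real i\<bar> \<le> r \<and> \<bar>real m - real j\<bar> \<le> r \<and>
                 \<bar>real l * hx - p1\<bar> \<le> max \<bar>real i * hx - p1\<bar> hx \<and> \<bar>real m * hy - p2\<bar> \<le> max \<bar>real j * hy - p2\<bar> hy \<and>
                 f (gv l m) < f (gv i j)"
      if ij: "\<bar>real i * hx - p1\<bar> < \<delta>" "\<bar>real j * hy - p2\<bar> < \<delta>"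
        and far: "\<bar>real i * hx - p1\<bar> + \<bar>real j * hy - p2\<bar> > \<rho> * H" for i j
    proof -
      have H\<delta>: "H < \<delta>" using Hd2 \<delta> by simp
      obtain k1 k2 :: int where k: "\<bar>of_int k1 * hx - p1\<bar> \<le> max \<bar>real i * hx - p1\<bar> hx"
        "\<bar>of_int k2 * hy - p2\<bar> \<le> max \<bar>real j * hy - p2\<bar> hy"
        "\<bar>of_int k1 * hx - real i * hx\<bar> \<le> (L + 2) * H" "\<bar>of_int k2 * hy - real j * hy\<bar> \<le> (L + 2) * H"
        "f (of_int k1 * hx, of_int k2 * hy) < f (real i * hx, real j * hy)"
        using descent[OF \<mu> M0 hx0 hy0 Hx Hy H\<delta> F1 F2 ij] far unfolding \<rho>_def L_def by blast
      have "\<bar>of_int k1 * hx - p1\<bar> < \<delta>" using k(1) ij Hx H\<delta> by linarith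
      then have k1: "0 < k1" "k1 < int n" using idx1 by blast+
      have "\<bar>of_int k2 * hy - p2\<bar> < \<delta>" using k(2) ij Hy H\<delta> by linarith
      then have k2: "0 < k2" "k2 < int n" using idx2 by blast+
      define l where "l = nat k1"
      define m where "m = nat k2"
      have lr: "real l = of_int k1" "real m = of_int k2" unfolding l_def m_def using k1 k2 by simp_all
      have LH: "(L+2) \<ge> 0" using L0 by simp
      have d1: "\<bar>real l - real i\<bar> \<le> (L+2) * \<kappa>"
        by (rule idx_bound[OF hx0 \<kappa>x _ LH]) (use k(3) lr hx0 in \<open>simp add: left_diff_distrib[symmetric] abs_mult\<close>)
      have d2: "\<bar>real m - real j\<bar> \<le> (L+2) * \<kappa>"
        by (rule idx_bound[OF hy0 \<kappa>y _ LH]) (use k(4) lr hy0 in \<open>simp add: left_diff_distrib[symmetric] abs_mult\<close>)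
      have "(L+2) * \<kappa> \<le> r" unfolding r_def using \<rho>0 \<kappa>0 by (simp add: mult_right_mono)
      then have r1: "\<bar>real l - real i\<bar> \<le> r" "\<bar>real m - real j\<bar> \<le> r" using d1 d2 by linarith+
      have ln: "l \<le> n" "m \<le> n" using k1 k2 unfolding l_def m_def by linarith+
      have lb: "\<bar>real l * hx - p1\<bar> \<le> max \<bar>real i * hx - p1\<bar> hx" "\<bar>real m * hy - p2\<bar> \<le> max \<bar>real j * hy - p2\<bar> hy"
        using k(1,2) unfolding lr .
      have fl: "f (gv l m) < f (gv i j)" using k(5) unfolding gv_def lr .
      show ?thesis by (rule exI[of _ l], rule exI[of _ m]) (use r1 ln lb fl in blast)
    qed
    have near: "\<bar>real i * hx - p1\<bar> + \<bar>real j * hy - p2\<bar> \<le> \<rho> * H"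
      if "i \<le> n" "j \<le> n" "gv i j \<in> U" "minimal_in_circle f a b n r i j" for i j
    proof (rule ccontr)
      assume "\<not> ?thesis"
      moreover have ij: "\<bar>real i * hx - p1\<bar> < \<delta>" "\<bar>real j * hy - p2\<bar> < \<delta>" using that(3) inU unfolding gv_def by auto
      ultimately obtain l m where lm: "l \<le> n" "m \<le> n" "\<bar>real l - real i\<bar> \<le> r" "\<bar>real m - real j\<bar> \<le> r"
        "f (gv l m) < f (gv i j)" using desc[OF ij] by force
      have "gv l m \<in> grid_circle a b n r i j" using circ lm by blast
      then have "f (gv i j) \<le> f (gv l m)" using that(4) unfolding minimal_in_circle_def gvE by blast
      then show False using lm by simp
    qed
    show "\<exists>!ij. fst ij \<le> n \<and> snd ij \<le> n \<and> grid_vertex a b n (fst ij) (snd ij) \<in> U \<and>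
                     minimal_in_circle f a b n r (fst ij) (snd ij)"
    proof -
      have p1in: "0 < p1" "p1 < a" using inB \<delta> by (metis abs_0 diff_self)+
      have p2in: "0 < p2" "p2 < b" using inB \<delta> by (metis abs_0 diff_self)+
      define V where "V = {(i,j). i \<le> n \<and> j \<le> n \<and> \<bar>real i * hx - p1\<bar> \<le> \<delta>/2 \<and> \<bar>real j * hy - p2\<bar> \<le> \<delta>/2}"
      have finV: "finite V"
        by (rule finite_subset[of _ "{..n} \<times> {..n}"]) (auto simp: V_def)
      define i0 where "i0 = nat (floor (p1 / hx))"
      define j0 where "j0 = nat (floor (p2 / hy))"
      have i0: "real i0 * hx \<le> p1" "p1 < real i0 * hx + hx" "i0 \<le> n"
      proof -
        have f0: "floor (p1 / hx) \<ge> 0" using p1in hx0 by simp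
        then have ri: "real i0 = of_int (floor (p1 / hx))" unfolding i0_def by simp
        have "real i0 \<le> p1 / hx" "p1 / hx < real i0 + 1" unfolding ri by linarith+
        then show "real i0 * hx \<le> p1" "p1 < real i0 * hx + hx" using hx0 by (simp_all add: field_simps)
        have "p1 / hx < a / hx" using p1in hx0 by (simp add: divide_strict_right_mono)
        also have "a / hx = real n" using nhx hx0 by (simp add: field_simps)
        finally show "i0 \<le> n" using \<open>real i0 \<le> p1 / hx\<close> by linarith
      qed
      have j0: "real j0 * hy \<le> p2" "p2 < real j0 * hy + hy" "j0 \<le> n"
      proof -
        have f0: "floor (p2 / hy) \<ge> 0" using p2in hy0 by simp
        then have ri: "real j0 = of_int (floor (p2 / hy))" unfolding j0_def by simp
        have "real j0 \<le> p2 / hy" "p2 / hy < real j0 + 1" unfolding ri by linarith+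
        then show "real j0 * hy \<le> p2" "p2 < real j0 * hy + hy" using hy0 by (simp_all add: field_simps)
        have "p2 / hy < b / hy" using p2in hy0 by (simp add: divide_strict_right_mono)
        also have "b / hy = real n" using nhy hy0 by (simp add: field_simps)
        finally show "j0 \<le> n" using \<open>real j0 \<le> p2 / hy\<close> by linarith
      qed
      have "(i0, j0) \<in> V" unfolding V_def using i0 j0 Hx Hy Hd2 by auto
      then have Vne: "V \<noteq> {}" by blast
      define F where "F = (\<lambda>ij. f (gv (fst ij) (snd ij)))"
      define ij where "ij = arg_min_on F V"
      have ijV: "ij \<in> V" and ijmin: "\<not> (\<exists>x\<in>V. F x < F ij)"
        using arg_min_if_finite[OF finV Vne, of F] unfolding ij_def by auto
      obtain i j where ijd: "ij = (i,j)" by (cases ij)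
      have ijb: "i \<le> n" "j \<le> n" "\<bar>real i * hx - p1\<bar> \<le> \<delta>/2" "\<bar>real j * hy - p2\<bar> \<le> \<delta>/2"
        using ijV unfolding ijd V_def by auto
      have ijd2: "\<bar>real i * hx - p1\<bar> < \<delta>" "\<bar>real j * hy - p2\<bar> < \<delta>" using ijb \<delta> by linarith+
      have nearij: "\<bar>real i * hx - p1\<bar> + \<bar>real j * hy - p2\<bar> \<le> \<rho> * H"
      proof (rule ccontr)
        assume "\<not> ?thesis"
        then obtain l m where lm: "l \<le> n" "m \<le> n"
          "\<bar>real l * hx - p1\<bar> \<le> max \<bar>real i * hx - p1\<bar> hx" "\<bar>real m * hy - p2\<bar> \<le> max \<bar>real j * hy - p2\<bar> hy"
          "f (gv l m) < f (gv i j)" using desc[OF ijd2] by force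
        have "\<bar>real l * hx - p1\<bar> \<le> \<delta>/2" using lm(3) ijb(3) Hx Hd2 unfolding le_max_iff_disj by (elim disjE) linarith+
        moreover have "\<bar>real m * hy - p2\<bar> \<le> \<delta>/2" using lm(4) ijb(4) Hy Hd2 unfolding le_max_iff_disj by (elim disjE) linarith+
        ultimately have "(l,m) \<in> V" unfolding V_def using lm(1,2) by auto
        moreover have "F (l,m) < F ij" unfolding F_def ijd using lm(5) by simp
        ultimately show False using ijmin by blast
      qed
      have ijU: "gv i j \<in> U" unfolding gv_def inU using ijd2 by simp
      have ijmin2: "minimal_in_circle f a b n r i j"
        unfolding minimal_in_circle_def
      proof
        fix q assume "q \<in> grid_circle a b n r i j"
        then obtain l m where q: "q = gv l m" "l \<le> n" "m \<le> n"
          "real_of_int (max \<bar>int l - int i\<bar> \<bar>int m - int j\<bar>) \<le> r"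
          unfolding grid_circle_def gvE by blast
        have lr: "\<bar>real l - real i\<bar> \<le> r" "\<bar>real m - real j\<bar> \<le> r"
          using q(4) by (simp_all add: of_int_max)
        have "\<bar>real l * hx - real i * hx\<bar> \<le> r * H"
        proof -
          have "\<bar>real l * hx - real i * hx\<bar> = \<bar>real l - real i\<bar> * hx"
            using hx0 by (simp add: left_diff_distrib[symmetric] abs_mult)
          also have "\<dots> \<le> r * hx" using lr hx0 by (simp add: mult_right_mono)
          also have "\<dots> \<le> r * H" using Hx r0 by (simp add: mult_left_mono)
          finally show ?thesis .
        qed
        moreover have "\<bar>real m * hy - real j * hy\<bar> \<le> r * H"
        proof -
          have "\<bar>real m * hy - real j * hy\<bar> = \<bar>real m - real j\<bar> * hy"
            using hy0 by (simp add: left_diff_distrib[symmetric] abs_mult)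
          also have "\<dots> \<le> r * hy" using lr hy0 by (simp add: mult_right_mono)
          also have "\<dots> \<le> r * H" using Hy r0 by (simp add: mult_left_mono)
          finally show ?thesis .
        qed
        ultimately have "\<bar>real l * hx - p1\<bar> \<le> \<delta>/2" "\<bar>real m * hy - p2\<bar> \<le> \<delta>/2"
          using nearij rHd by linarith+
        then have "(l,m) \<in> V" unfolding V_def using q(2,3) by auto
        then have "\<not> F (l,m) < F ij" using ijmin by blast
        then show "f (grid_vertex a b n i j) \<le> f q" unfolding F_def ijd q gvE by simp
      qed
      have uniq: "i1 = i2 \<and> j1 = j2"
        if u1: "i1 \<le> n" "j1 \<le> n" "gv i1 j1 \<in> U" "minimal_in_circle f a b n r i1 j1"
          and u2: "i2 \<le> n" "j2 \<le> n" "gv i2 j2 \<in> U" "minimal_in_circle f a b n r i2 j2" for i1 j1 i2 j2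
      proof -
        have n1: "\<bar>real i1 * hx - p1\<bar> + \<bar>real j1 * hy - p2\<bar> \<le> \<rho> * H" using near u1 by blast
        have n2: "\<bar>real i2 * hx - p1\<bar> + \<bar>real j2 * hy - p2\<bar> \<le> \<rho> * H" using near u2 by blast
        have \<rho>2: "2*\<rho> \<ge> 0" using \<rho>0 by simp
        have "\<bar>real i1 - real i2\<bar> * hx = \<bar>real i1 * hx - real i2 * hx\<bar>"
          using hx0 by (simp add: left_diff_distrib[symmetric] abs_mult)
        also have "\<dots> \<le> 2*\<rho> * H" using n1 n2 by linarith
        finally have di: "\<bar>real i1 - real i2\<bar> \<le> 2*\<rho> * \<kappa>" by (rule idx_bound[OF hx0 \<kappa>x _ \<rho>2])
        have "\<bar>real j1 - real j2\<bar> * hy = \<bar>real j1 * hy - real j2 * hy\<bar>"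
          using hy0 by (simp add: left_diff_distrib[symmetric] abs_mult)
        also have "\<dots> \<le> 2*\<rho> * H" using n1 n2 by linarith
        finally have dj: "\<bar>real j1 - real j2\<bar> \<le> 2*\<rho> * \<kappa>" by (rule idx_bound[OF hy0 \<kappa>y _ \<rho>2])
        have "2*\<rho>*\<kappa> \<le> r" unfolding r_def using L0 \<kappa>0 by (simp add: mult_right_mono)
        then have r12: "\<bar>real i2 - real i1\<bar> \<le> r" "\<bar>real j2 - real j1\<bar> \<le> r"
          "\<bar>real i1 - real i2\<bar> \<le> r" "\<bar>real j1 - real j2\<bar> \<le> r" using di dj by linarith+
        have "gv i2 j2 \<in> grid_circle a b n r i1 j1" using circ u2(1,2) r12(1,2) by blast
        then have le1: "f (gv i1 j1) \<le> f (gv i2 j2)" using u1(4) unfolding minimal_in_circle_def gvE by blast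
        have "gv i1 j1 \<in> grid_circle a b n r i2 j2" using circ u1(1,2) r12(3,4) by blast
        then have le2: "f (gv i2 j2) \<le> f (gv i1 j1)" using u2(4) unfolding minimal_in_circle_def gvE by blast
        have "gv i1 j1 = gv i2 j2"
        proof (rule ccontr)
          assume "gv i1 j1 \<noteq> gv i2 j2"
          then have "f (gv i1 j1) \<noteq> f (gv i2 j2)"
            using n(2) u1(1,2) u2(1,2) unfolding nondegenerate_def gvE by blast
          then show False using le1 le2 by simp
        qed
        then show ?thesis unfolding gv_def using hx0 hy0 by simp
      qed
      show ?thesis
      proof (rule ex1I[of _ "(i,j)"])
        show "fst (i,j) \<le> n \<and> snd (i,j) \<le> n \<and> grid_vertex a b n (fst (i,j)) (snd (i,j)) \<in> U \<and>
              minimal_in_circle f a b n r (fst (i,j)) (snd (i,j))"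
          using ijb ijU ijmin2 gvE by simp
      next
        fix y assume y: "fst y \<le> n \<and> snd y \<le> n \<and> grid_vertex a b n (fst y) (snd y) \<in> U \<and>
              minimal_in_circle f a b n r (fst y) (snd y)"
        obtain i' j' where yd: "y = (i',j')" by (cases y)
        show "y = (i,j)" using uniq[of i' j' i j] y ijb ijU ijmin2 unfolding yd gvE by simp
      qed
    qed
  qed
qed



theorem theorem1:
  fixes a b :: real and f :: "real \<times> real \<Rightarrow> real" and p :: "real \<times> real"
  assumes "a > 0" and "b > 0"
    and "Ck_on 3 ({0<..<a} \<times> {0<..<b}) f"
    and "p \<in> {0<..<a} \<times> {0<..<b}"
    and "\<exists>e>0. \<forall>q\<in>{0..a} \<times> {0..b}. dist q p < e \<longrightarrow> f p \<le> f q"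
    and "hessian_pos_def f p"
  shows "\<exists>U r. open U \<and> p \<in> U \<and> r > 0 \<and>
           (\<exists>N. \<forall>n\<ge>N. n \<ge> 1 \<and> nondegenerate f a b n \<longrightarrow>
              (\<exists>!ij. fst ij \<le> n \<and> snd ij \<le> n \<and>
                     grid_vertex a b n (fst ij) (snd ij) \<in> U \<and>
                     minimal_in_circle f a b n r (fst ij) (snd ij)))"
proof -
  obtain p1 p2 where p: "p = (p1,p2)" by (cases p)
  obtain m M where mM: "0 < m" "0 \<le> M" and rest: "\<forall>\<epsilon>. 0 < \<epsilon> \<and> \<epsilon> \<le> 1 \<longrightarrow> (\<exists>\<delta>>0.
     (\<forall>s t. \<bar>s - p1\<bar> < \<delta> \<longrightarrow> \<bar>t - p2\<bar> < \<delta> \<longrightarrow> 0 < s \<and> s < a \<and> 0 < t \<and> t < b) \<and>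
     (\<forall>x1 x2 y1 y2. \<bar>x1 - p1\<bar> < \<delta> \<longrightarrow> \<bar>x2 - p2\<bar> < \<delta> \<longrightarrow> \<bar>y1 - p1\<bar> < \<delta> \<longrightarrow> \<bar>y2 - p2\<bar> < \<delta> \<longrightarrow>
        \<bar>f (y1,y2) - f (x1,x2) - partial1 f (x1,x2) * (y1-x1) - partial2 f (x1,x2) * (y2-x2)\<bar>
          \<le> M * (\<bar>y1-x1\<bar>+\<bar>y2-x2\<bar>)^2) \<and>
     (\<forall>x1 x2. \<bar>x1 - p1\<bar> < \<delta> \<longrightarrow> \<bar>x2 - p2\<bar> < \<delta> \<longrightarrow>
        partial1 f (x1,x2) * (x1 - p1) + partial2 f (x1,x2) * (x2 - p2)
          \<ge> (m - \<epsilon>) * (\<bar>x1 - p1\<bar> + \<bar>x2 - p2\<bar>)^2 \<and>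
        \<bar>partial1 f (x1,x2)\<bar> \<le> M * (\<bar>x1 - p1\<bar> + \<bar>x2 - p2\<bar>) \<and>
        \<bar>partial2 f (x1,x2)\<bar> \<le> M * (\<bar>x1 - p1\<bar> + \<bar>x2 - p2\<bar>)))"
    using local_model[OF assms(1,2,3) assms(4,5,6)[unfolded p]] by (elim exE conjE) (rule that; assumption)
  define \<epsilon> where "\<epsilon> = min 1 (m/2)"
  have \<epsilon>: "0 < \<epsilon> \<and> \<epsilon> \<le> 1" unfolding \<epsilon>_def using mM by simp
  have \<mu>: "m - \<epsilon> > 0" unfolding \<epsilon>_def using mM by simp
  obtain \<delta> where \<delta>: "\<delta> > 0"
    and inB: "\<forall>s t. \<bar>s - p1\<bar> < \<delta> \<longrightarrow> \<bar>t - p2\<bar> < \<delta> \<longrightarrow> 0 < s \<and> s < a \<and> 0 < t \<and> t < b"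
    and F1: "\<forall>x1 x2 y1 y2. \<bar>x1 - p1\<bar> < \<delta> \<longrightarrow> \<bar>x2 - p2\<bar> < \<delta> \<longrightarrow> \<bar>y1 - p1\<bar> < \<delta> \<longrightarrow> \<bar>y2 - p2\<bar> < \<delta> \<longrightarrow>
        \<bar>f (y1,y2) - f (x1,x2) - partial1 f (x1,x2) * (y1-x1) - partial2 f (x1,x2) * (y2-x2)\<bar>
          \<le> M * (\<bar>y1-x1\<bar>+\<bar>y2-x2\<bar>)^2"
    and F2: "\<forall>x1 x2. \<bar>x1 - p1\<bar> < \<delta> \<longrightarrow> \<bar>x2 - p2\<bar> < \<delta> \<longrightarrow>
        partial1 f (x1,x2) * (x1 - p1) + partial2 f (x1,x2) * (x2 - p2)
          \<ge> (m - \<epsilon>) * (\<bar>x1 - p1\<bar> + \<bar>x2 - p2\<bar>)^2 \<and>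
        \<bar>partial1 f (x1,x2)\<bar> \<le> M * (\<bar>x1 - p1\<bar> + \<bar>x2 - p2\<bar>) \<and>
        \<bar>partial2 f (x1,x2)\<bar> \<le> M * (\<bar>x1 - p1\<bar> + \<bar>x2 - p2\<bar>)"
    using rest[rule_format, OF \<epsilon>] by (elim exE conjE) (rule that; assumption)
  show ?thesis
    using discrete[OF assms(1,2) \<delta> \<mu> mM(2) inB F1 F2] unfolding p .
qed


end
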